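(* Let $t$ and $\delta\ge2$ be integers and for $t^-\in\{t-\delta+2,\dots,t\}$ define $$\hat\mu_{t^-}=\frac{\sum_{i=t^-}^{t}\big(i-\frac{2t-\delta+1}{2}\big)}{\sum_{i=t-\delta+1}^{t}\big(i-(t-\delta+1)\big)\big(i-\frac{2t-\delta+1}{2}\big)}.$$ Then $\hat\mu_t=1$ when $\delta=2$; $\hat\mu_t=\hat\mu_{t-1}$ when $\delta=3$; and when $\delta>3$, $$\hat\mu_t<\dots<\hat\mu_{\lfloor\frac{2t-\delta+2}{2}\rfloor}=\hat\mu_{\lceil\frac{2t-\delta+2}{2}\rceil}>\dots>\hat\mu_{t-\delta+2}.$$ *)

theory Defs
  imports Complex_Main
begin

definition mu_hat :: "int \<Rightarrow> int \<Rightarrow> int \<Rightarrow> real" where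
  "mu_hat t \<delta> tm =
     (\<Sum>i\<in>{tm..t}. (of_int i - of_int (2*t - \<delta> + 1) / 2)) /
     (\<Sum>i\<in>{t-\<delta>+1..t}. of_int (i - (t - \<delta> + 1)) * (of_int i - of_int (2*t - \<delta> + 1) / 2))"

end

theory Submission imports Defs begin

lemma S1: "(\<Sum>k<n. real k) = real n * (real n - 1) / 2"
  by (induction n) (auto simp: field_simps)
lemma S2: "(\<Sum>k<n. real k ^ 2) = real n * (real n - 1) * (2 * real n - 1) / 6"
  by (induction n) (auto simp: field_simps power2_eq_square)

lemma Dform: "(\<Sum>k<n. real k * (real k - (real n - 1) / 2)) = real n * (real n - 1) * (real n + 1) / 12"
proof -
  have "(\<Sum>k<n. real k * (real k - (real n - 1) / 2)) = (\<Sum>k<n. real k ^ 2) - (real n - 1)/2 * (\<Sum>k<n. real k)"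
  proof -
    have "(\<Sum>k<n. real k * (real k - (real n - 1) / 2)) = (\<Sum>k<n. real k ^ 2 - (real n - 1)/2 * real k)"
      by (rule sum.cong) (auto simp: algebra_simps power2_eq_square)
    then show ?thesis by (simp add: sum_subtractf sum_distrib_left)
  qed
  also have "\<dots> = real n * (real n - 1) * (real n + 1) / 12"
    by (simp add: S1 S2 field_simps)
  finally show ?thesis .
qed

lemma Dpos:
  fixes t \<delta> :: int assumes "\<delta> \<ge> 2"
  shows "(\<Sum>i\<in>{t-\<delta>+1..t}. of_int (i - (t - \<delta> + 1)) * (of_int i - of_int (2*t - \<delta> + 1) / 2)) > (0::real)"
proof -
  define n where "n = nat \<delta>"
  have dn: "\<delta> = int n" using assms n_def by simp
  have eq: "{t-\<delta>+1..t} = (\<lambda>k. t-\<delta>+1 + int k) ` {..<n}"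
  proof (rule set_eqI, rule iffI)
    fix x assume "x \<in> {t-\<delta>+1..t}"
    then have "x = t-\<delta>+1 + int (nat (x - (t-\<delta>+1)))" "nat (x - (t-\<delta>+1)) < n" using dn by auto
    then show "x \<in> (\<lambda>k. t-\<delta>+1 + int k) ` {..<n}" by blast
  qed (auto simp: dn)
  have inj: "inj_on (\<lambda>k. t-\<delta>+1 + int k) {..<n}" by (auto simp: inj_on_def)
  have "(\<Sum>i\<in>{t-\<delta>+1..t}. of_int (i - (t - \<delta> + 1)) * (of_int i - of_int (2*t - \<delta> + 1) / 2))
      = (\<Sum>k<n. real k * (real k - (real n - 1) / 2))"
    unfolding eq by (subst sum.reindex[OF inj]) (auto simp: dn field_simps intro!: sum.cong)
  also have "\<dots> = real n * (real n - 1) * (real n + 1) / 12" by (rule Dform)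
  also have "\<dots> > 0" using assms dn by simp
  finally show ?thesis .
qed

lemma step:
  fixes t \<delta> j :: int assumes "\<delta> \<ge> 2" "j \<le> t"
  shows "mu_hat t \<delta> j - mu_hat t \<delta> (j+1) = (of_int j - of_int (2*t - \<delta> + 1) / 2) /
     (\<Sum>i\<in>{t-\<delta>+1..t}. of_int (i - (t - \<delta> + 1)) * (of_int i - of_int (2*t - \<delta> + 1) / (2::real)))"
proof -
  have "{j..t} = insert j {j+1..t}" using assms by auto
  then show ?thesis unfolding mu_hat_def by (simp add: diff_divide_distrib[symmetric])
qed



theorem lemma4:
  fixes t \<delta> :: int
  assumes "\<delta> \<ge> 2"
  shows "(\<delta> = 2 \<longrightarrow> mu_hat t \<delta> t = 1)
       \<and> (\<delta> = 3 \<longrightarrow> mu_hat t \<delta> t = mu_hat t \<delta> (t - 1))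
       \<and> (\<delta> > 3 \<longrightarrow>
            (\<forall>j. \<lceil>of_int (2*t - \<delta> + 2) / (2::real)\<rceil> \<le> j \<and> j < t
                   \<longrightarrow> mu_hat t \<delta> (j + 1) < mu_hat t \<delta> j)
          \<and> mu_hat t \<delta> \<lfloor>of_int (2*t - \<delta> + 2) / (2::real)\<rfloor>
              = mu_hat t \<delta> \<lceil>of_int (2*t - \<delta> + 2) / (2::real)\<rceil>
          \<and> (\<forall>j. t - \<delta> + 2 \<le> j \<and> j < \<lfloor>of_int (2*t - \<delta> + 2) / (2::real)\<rfloor>
                   \<longrightarrow> mu_hat t \<delta> j < mu_hat t \<delta> (j + 1)))"
proof -
  let ?D = "(\<Sum>i\<in>{t-\<delta>+1..t}. of_int (i - (t - \<delta> + 1)) * (of_int i - of_int (2*t - \<delta> + 1) / (2::real)))"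
  have D: "?D > 0" using Dpos[OF assms] .
  have st: "mu_hat t \<delta> j - mu_hat t \<delta> (j+1) = (of_int j - of_int (2*t - \<delta> + 1) / 2) / ?D"
    if "j \<le> t" for j using step[OF assms that] .
  have fl: "\<lfloor>of_int (2*t - \<delta> + 2) / (2::real)\<rfloor> = (2*t - \<delta> + 2) div 2"
    by (metis floor_divide_of_int_eq of_int_numeral)
  have cl: "\<lceil>of_int (2*t - \<delta> + 2) / (2::real)\<rceil> = - ((-(2*t - \<delta> + 2)) div 2)"
    by (metis ceiling_def floor_divide_of_int_eq of_int_minus of_int_numeral minus_divide_left)
  have A: "\<delta> = 2 \<longrightarrow> mu_hat t \<delta> t = 1"
  proof
    assume "\<delta> = 2"
    moreover have "{t-2+1..t} = {t-1, t}" by auto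
    ultimately show "mu_hat t \<delta> t = 1" unfolding mu_hat_def by (simp add: field_simps)
  qed
  have B: "\<delta> = 3 \<longrightarrow> mu_hat t \<delta> t = mu_hat t \<delta> (t - 1)"
  proof
    assume d: "\<delta> = 3"
    have "mu_hat t \<delta> (t-1) - mu_hat t \<delta> (t - 1 + 1) = 0" using st[of "t-1"] d by simp
    then show "mu_hat t \<delta> t = mu_hat t \<delta> (t - 1)" by simp
  qed
  have C1: "mu_hat t \<delta> (j + 1) < mu_hat t \<delta> j"
    if "\<lceil>of_int (2*t - \<delta> + 2) / (2::real)\<rceil> \<le> j" "j < t" for j
  proof -
    have "2*j > 2*t - \<delta> + 1" using that(1) unfolding cl by linarith
    then have "real_of_int (2*j) > of_int (2*t - \<delta> + 1)" by linarith
    then have "(of_int j - of_int (2*t - \<delta> + 1) / 2) / ?D > 0" using D by (intro divide_pos_pos) auto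
    then show ?thesis using st[of j] that by simp
  qed
  have C3: "mu_hat t \<delta> j < mu_hat t \<delta> (j + 1)"
    if "t - \<delta> + 2 \<le> j" "j < \<lfloor>of_int (2*t - \<delta> + 2) / (2::real)\<rfloor>" for j
  proof -
    have "2*j < 2*t - \<delta> + 1" using that(2) unfolding fl by linarith
    then have "real_of_int (2*j) < of_int (2*t - \<delta> + 1)" by linarith
    then have "(of_int j - of_int (2*t - \<delta> + 1) / 2) / ?D < 0" using D by (intro divide_neg_pos) auto
    moreover have "j \<le> t" using that(2) assms unfolding fl by linarith
    ultimately show ?thesis using st[of j] by simp
  qed
  have C2: "mu_hat t \<delta> \<lfloor>of_int (2*t - \<delta> + 2) / (2::real)\<rfloor>
              = mu_hat t \<delta> \<lceil>of_int (2*t - \<delta> + 2) / (2::real)\<rceil>"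
  proof (cases "even \<delta>")
    case True
    then have "\<lfloor>of_int (2*t - \<delta> + 2) / (2::real)\<rfloor> = \<lceil>of_int (2*t - \<delta> + 2) / (2::real)\<rceil>"
      unfolding fl cl by (elim evenE) simp
    then show ?thesis by simp
  next
    case False
    then obtain m where m: "\<delta> = 2*m+1" by (metis oddE)
    have f: "\<lfloor>of_int (2*t - \<delta> + 2) / (2::real)\<rfloor> = t - m"
    proof -
      have "(2*t - \<delta> + 2) div 2 = t - m" using m by simp
      then show ?thesis using fl by simp
    qed
    have c: "\<lceil>of_int (2*t - \<delta> + 2) / (2::real)\<rceil> = t - m + 1"
    proof -
      have "- ((-(2*t - \<delta> + 2)) div 2) = t - m + 1" using m by simp
      then show ?thesis using cl by simp
    qed
    have "t - m \<le> t" using assms m by simp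
    from st[OF this] have "mu_hat t \<delta> (t-m) - mu_hat t \<delta> (t-m+1) = 0" unfolding m by simp
    then show ?thesis unfolding f c by simp
  qed
  show ?thesis using A B C1 C2 C3 by blast
qed

end
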